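(* Let $V$ be a vector space over $\mathbb{F}_2$ and let $\xi\in\mathbb{F}_2[V]$ be nonzero, with $d=|D(\xi)|$. (i) If $\xi\in I[V]$, then $d\geq 2$ and there are $1$-fold Pfister elements $\pi_1,\ldots,\pi_p$ with $\xi=\pi_1+\cdots+\pi_p$ and $p\leq d$; if moreover $0\in D(\xi)$, such a decomposition exists with $p\leq d-1$. (ii) If $\xi\in I[V]$ and $\varepsilon_1(\xi)=0$, then $d\geq 4$ and there are $2$-fold Pfister elements $\pi_1,\ldots,\pi_p$ with $\xi=\pi_1+\cdots+\pi_p$ and $p\leq d-2$; if moreover $0\in D(\xi)$, such a decomposition exists with $p\leq d-3$.
   Context: For an $\mathbb{F}_2$-vector space $V$, $\mathbb{F}_2[V]$ is the group algebra, whose elements are finite sums $\sum_{v\in V}\alpha_vX^v$ ($\alpha_v\in\mathbb{F}_2$), with $X^0=1$ and $X^uX^v=X^{u+v}$. Define group homomorphisms $\varepsilon_0:\mathbb{F}_2[V]\to\mathbb{F}_2$, $\varepsilon_0(\sum\alpha_vX^v)=\sum\alpha_v$ (augmentation), and $\varepsilon_1:\mathbb{F}_2[V]\to V$, $\varepsilon_1(\sum\alpha_vX^v)=\sum\alpha_v v$. $I[V]=\ker\varepsilon_0$. For $m\geq1$, an $m$-fold Pfister element is a product $(1+X^{v_1})\cdots(1+X^{v_m})$ with $v_1,\ldots,v_m\in V$ (so $0$ is an $m$-fold Pfister element). The support of $\xi=\sum\alpha_vX^v$ is $D(\xi)=\{v\in V\mid \alpha_v=1\}$. *)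

theory Defs
  imports "HOL-Library.Poly_Mapping" "HOL-Library.Z2"
begin

text \<open>The group algebra F2[V] of an F2-vector space V (= an abelian group with
  v + v = 0) is modelled as the finitely supported functions V -> F2, i.e. the type
  (v =>0 bit), with the convolution product of Poly_Mapping
  (X^u X^v = X^(u+v)).\<close>

definition X :: "'v::monoid_add \<Rightarrow> ('v \<Rightarrow>\<^sub>0 bit)" where
  "X v = Poly_Mapping.single v 1"

definition supp :: "('v \<Rightarrow>\<^sub>0 bit) \<Rightarrow> 'v set" where
  "supp \<xi> = Poly_Mapping.keys \<xi>"

definition eps0 :: "('v \<Rightarrow>\<^sub>0 bit) \<Rightarrow> bit" where
  "eps0 \<xi> = (\<Sum>v\<in>Poly_Mapping.keys \<xi>. Poly_Mapping.lookup \<xi> v)"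

text \<open>epsilon_1: sum of alpha_v v; over F2, alpha_v v = v on the support, 0 otherwise\<close>
definition eps1 :: "('v::comm_monoid_add \<Rightarrow>\<^sub>0 bit) \<Rightarrow> 'v" where
  "eps1 \<xi> = (\<Sum>v\<in>Poly_Mapping.keys \<xi>. v)"

definition augIdeal :: "('v \<Rightarrow>\<^sub>0 bit) set" where
  "augIdeal = {\<xi>. eps0 \<xi> = 0}"

definition pfister :: "nat \<Rightarrow> ('v::monoid_add \<Rightarrow>\<^sub>0 bit) \<Rightarrow> bool" where
  "pfister m \<pi> \<longleftrightarrow> (\<exists>vs. length vs = m \<and> \<pi> = prod_list (map (\<lambda>v. 1 + X v) vs))"

end

theory Submission imports Defs begin

lemma bit_self_add: "(a::bit) + a = 0" by (cases a) simp_all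

lemma pm_self_add: "(x::'v \<Rightarrow>\<^sub>0 bit) + x = 0"
  by (rule poly_mapping_eqI) (simp add: lookup_add bit_self_add)

lemma X_add: "X (a::'v::monoid_add) * X b = X (a + b)"
  by (simp add: X_def mult_single)

lemma X0: "X (0::'v::monoid_add) = 1" by (simp add: X_def)

definition phi :: "'v::monoid_add \<Rightarrow> ('v \<Rightarrow>\<^sub>0 bit)" where "phi v = 1 + X v"

lemma phi0: "phi (0::'v::monoid_add) = 0"
  by (simp add: phi_def X0 pm_self_add)

lemma phi_key: "phi (a::'v::comm_monoid_add) + phi b = phi a * phi b + phi (a + b)"
proof -
  have m: "phi a * phi b = 1 + X a + X b + X (a+b)"
    by (simp add: phi_def distrib_left distrib_right X_add add.assoc)
  have "phi a * phi b + phi (a + b) = (phi a + phi b) + (X (a+b) + X (a+b))"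
    unfolding m by (simp only: phi_def ac_simps)
  then show ?thesis by (simp only: pm_self_add add_0_right)
qed

fun terms :: "'v::comm_monoid_add \<Rightarrow> 'v list \<Rightarrow> ('v \<Rightarrow>\<^sub>0 bit) list" where
  "terms s [] = []"
| "terms s (v # vs) = phi s * phi v # terms (s + v) vs"

lemma terms_len: "length (terms s vs) = length vs"
  by (induction vs arbitrary: s) auto

lemma terms_pf: "\<pi> \<in> set (terms s vs) \<Longrightarrow> pfister 2 \<pi>"
proof (induction vs arbitrary: s)
  case (Cons v vs)
  then show ?case
    apply (auto simp: pfister_def)
    apply (rule exI[of _ "[s, v]"]) apply (simp add: phi_def)
    done
qed simp

lemma terms_sum: "phi s + sum_list (map phi vs) = phi (s + sum_list vs) + sum_list (terms s vs)"
proof (induction vs arbitrary: s)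
  case (Cons v vs)
  have "phi s + sum_list (map phi (v # vs)) = phi s * phi v + (phi (s + v) + sum_list (map phi vs))"
    by (simp add: phi_key add.assoc)
  also have "\<dots> = phi s * phi v + (phi (s + v + sum_list vs) + sum_list (terms (s+v) vs))"
    using Cons by simp
  finally show ?case by (simp add: algebra_simps)
qed simp

lemma two_fold:
  fixes us :: "'v::ab_group_add list"
  assumes char2: "\<And>v::'v. v + v = 0" and "length us \<ge> 2" and "sum_list us = 0"
  shows "\<exists>\<pi>s. (\<forall>\<pi>\<in>set \<pi>s. pfister 2 \<pi>) \<and> sum_list (map phi us) = sum_list \<pi>s \<and> length \<pi>s = length us - 2"
proof -
  obtain a rest where us: "us = a # rest" using assms(2) by (cases us) auto
  then have "rest \<noteq> []" using assms(2) by auto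
  then obtain ws w where rest: "rest = ws @ [w]" by (metis rev_exhaust)
  have s: "a + sum_list ws + w = 0" using assms(3) us rest by (simp add: add.assoc)
  have w: "a + sum_list ws = w"
  proof -
    have "a + sum_list ws = (a + sum_list ws + w) + w" by (simp add: add.assoc char2)
    then show ?thesis using s by simp
  qed
  have "sum_list (map phi us) = (phi a + sum_list (map phi ws)) + phi w"
    by (simp add: us rest add.assoc)
  also have "\<dots> = sum_list (terms a ws)"
    using terms_sum[of a ws] w by (simp add: add.assoc add.commute[of "phi w"] pm_self_add)
  finally show ?thesis
    by (intro exI[of _ "terms a ws"]) (auto simp: terms_pf terms_len us rest)
qed


lemma of_nat_bit: "(of_nat n :: bit) = (if even n then 0 else 1)"
  by (induction n) auto

lemma xi_sum: "(\<xi>::'v::monoid_add \<Rightarrow>\<^sub>0 bit) = (\<Sum>v\<in>Poly_Mapping.keys \<xi>. X v)"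
proof (rule poly_mapping_eqI)
  fix k
  have "Poly_Mapping.lookup (\<Sum>v\<in>Poly_Mapping.keys \<xi>. X v) k = (\<Sum>v\<in>Poly_Mapping.keys \<xi>. Poly_Mapping.lookup (X v) k)"
    by (simp add: Poly_Mapping.lookup_sum)
  also have "\<dots> = (\<Sum>v\<in>Poly_Mapping.keys \<xi>. if v = k then 1 else 0)"
    by (rule sum.cong) (auto simp: X_def lookup_single)
  also have "\<dots> = Poly_Mapping.lookup \<xi> k"
    by (auto simp: in_keys_iff)
  finally show "Poly_Mapping.lookup \<xi> k = Poly_Mapping.lookup (\<Sum>v\<in>Poly_Mapping.keys \<xi>. X v) k" by simp
qed

lemma phi_list: "sum_list (map phi vs) = of_nat (length vs) + sum_list (map X vs)"
  by (induction vs) (auto simp: phi_def algebra_simps)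

lemma of_nat_even_pm: "even n \<Longrightarrow> (of_nat n :: 'v::monoid_add \<Rightarrow>\<^sub>0 bit) = 0"
  by (metis of_nat_bit single_of_nat single_zero)

lemma pf1: "pfister 1 (phi v)"
  unfolding pfister_def by (rule exI[of _ "[v]"]) (simp add: phi_def)

theorem lemma1p1:
  fixes \<xi> :: "'v::ab_group_add \<Rightarrow>\<^sub>0 bit"
  assumes char2: "\<And>v::'v. v + v = 0"
    and nz: "\<xi> \<noteq> 0"
  defines "d \<equiv> card (supp \<xi>)"
  shows "(\<xi> \<in> augIdeal \<longrightarrow>
            d \<ge> 2
          \<and> (\<exists>\<pi>s. (\<forall>\<pi>\<in>set \<pi>s. pfister 1 \<pi>) \<and> \<xi> = sum_list \<pi>s \<and> length \<pi>s \<le> d)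
          \<and> (0 \<in> supp \<xi> \<longrightarrow>
               (\<exists>\<pi>s. (\<forall>\<pi>\<in>set \<pi>s. pfister 1 \<pi>) \<and> \<xi> = sum_list \<pi>s \<and> length \<pi>s \<le> d - 1)))
       \<and> (\<xi> \<in> augIdeal \<and> eps1 \<xi> = 0 \<longrightarrow>
            d \<ge> 4
          \<and> (\<exists>\<pi>s. (\<forall>\<pi>\<in>set \<pi>s. pfister 2 \<pi>) \<and> \<xi> = sum_list \<pi>s \<and> length \<pi>s \<le> d - 2)
          \<and> (0 \<in> supp \<xi> \<longrightarrow>
               (\<exists>\<pi>s. (\<forall>\<pi>\<in>set \<pi>s. pfister 2 \<pi>) \<and> \<xi> = sum_list \<pi>s \<and> length \<pi>s \<le> d - 3)))"
proof -
  obtain vs where vs: "distinct vs" "set vs = Poly_Mapping.keys \<xi>"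
    using finite_distinct_list[of "Poly_Mapping.keys \<xi>"] finite_keys by blast
  have len: "length vs = d" unfolding d_def supp_def using vs by (metis distinct_card)
  have xis: "\<xi> = sum_list (map X vs)"
    using xi_sum[of \<xi>] vs by (simp add: sum_list_distinct_conv_sum_set)
  have e1: "eps1 \<xi> = sum_list vs"
    unfolding eps1_def using vs sum_list_distinct_conv_sum_set[of vs "\<lambda>x. x"] by simp
  have e0: "eps0 \<xi> = of_nat d"
  proof -
    have "eps0 \<xi> = (\<Sum>v\<in>Poly_Mapping.keys \<xi>. 1)"
      unfolding eps0_def by (rule sum.cong) (auto simp: in_keys_iff)
    then show ?thesis by (simp add: d_def supp_def)
  qed
  have d0: "d \<noteq> 0" using nz len vs by (metis keys_eq_empty length_0_conv set_empty)
  show ?thesis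
  proof (intro conjI impI)
    assume aug: "\<xi> \<in> augIdeal"
    then have ev: "even d" using e0 by (auto simp: augIdeal_def of_nat_bit split: if_splits)
    then show d2: "d \<ge> 2" using d0 by presburger
    have xphi: "\<xi> = sum_list (map phi vs)"
      using phi_list[of vs] xis len ev by (simp add: of_nat_even_pm)
    show "\<exists>\<pi>s. (\<forall>\<pi>\<in>set \<pi>s. pfister 1 \<pi>) \<and> \<xi> = sum_list \<pi>s \<and> length \<pi>s \<le> d"
      by (rule exI[of _ "map phi vs"]) (auto simp del: One_nat_def simp add: pf1 xphi len)
    {
      assume "0 \<in> supp \<xi>"
      then have z: "0 \<in> set vs" using vs by (simp add: supp_def)
      have xphi': "\<xi> = sum_list (map phi (remove1 0 vs))"
        using sum_list_map_remove1[OF z, of phi] xphi by (simp add: phi0)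
      show "\<exists>\<pi>s. (\<forall>\<pi>\<in>set \<pi>s. pfister 1 \<pi>) \<and> \<xi> = sum_list \<pi>s \<and> length \<pi>s \<le> d - 1"
        by (rule exI[of _ "map phi (remove1 0 vs)"]) (auto simp del: One_nat_def simp add: pf1 xphi' len length_remove1 z)
    }
  next
    assume a: "\<xi> \<in> augIdeal \<and> eps1 \<xi> = 0"
    then have ev: "even d" using e0 by (auto simp: augIdeal_def of_nat_bit split: if_splits)
    have s0: "sum_list vs = 0" using a e1 by simp
    have xphi: "\<xi> = sum_list (map phi vs)"
      using phi_list[of vs] xis len ev by (simp add: of_nat_even_pm)
    have "d \<noteq> 2"
    proof
      assume "d = 2"
      then obtain p q where pq: "vs = [p, q]" using len
        by (metis One_nat_def Suc_1 length_0_conv length_Suc_conv)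
      then have "p \<noteq> q" "p + q = 0" using vs s0 by auto
      moreover have "p + q = 0 \<Longrightarrow> p = q"
        by (metis add.assoc add_0_right char2)
      ultimately show False by simp
    qed
    then show d4: "d \<ge> 4" using d0 ev by presburger
    show "\<exists>\<pi>s. (\<forall>\<pi>\<in>set \<pi>s. pfister 2 \<pi>) \<and> \<xi> = sum_list \<pi>s \<and> length \<pi>s \<le> d - 2"
      using two_fold[of vs] char2 s0 d4 len xphi by fastforce
    {
      assume "0 \<in> supp \<xi>"
      then have z: "0 \<in> set vs" using vs by (simp add: supp_def)
      have xphi': "\<xi> = sum_list (map phi (remove1 0 vs))"
        using sum_list_map_remove1[OF z, of phi] xphi by (simp add: phi0)
      have s0': "sum_list (remove1 0 vs) = 0"
        using sum_list_map_remove1[OF z, of id] s0 by simp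
      have l': "length (remove1 0 vs) = d - 1" by (simp add: length_remove1 z len)
      show "\<exists>\<pi>s. (\<forall>\<pi>\<in>set \<pi>s. pfister 2 \<pi>) \<and> \<xi> = sum_list \<pi>s \<and> length \<pi>s \<le> d - 3"
        using two_fold[of "remove1 0 vs"] char2 s0' d4 l' xphi' by fastforce
    }
  qed
qed

end
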